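(* Let $G$ be a graph, $\mathcal{C}=\{1,\dots,q\}$ a set of colors, $\lambda:E(G)\to 2^{\mathcal{C}}\setminus\{\emptyset\}$, and $\gamma:\{(e,c)\mid e\in E(G),c\in\lambda(e)\}\to\mathbb{Q}_{\ge 0}$. Construct $G'$ as follows: for each $c\in\mathcal{C}$ let $G_c$ be a copy of $G$ with vertex set $V(G_c)=\{v_c\mid v\in V(G)\}$ containing exactly the edges $\{v_c,w_c\}$ with $\{v,w\}\in E(G)$ and $c\in\lambda(\{v,w\})$, of weight $\gamma'(\{v_c,w_c\})=\gamma(\{v,w\},c)$; for each $v\in V(G)$ add an independent set $J(v)$ of $q-1$ new vertices and all edges $\{v_c,x\}$ for $c\in\mathcal{C}$, $x\in J(v)$, each of weight $0$. Let $J=\bigcup_{v\in V(G)}J(v)$, partition $V(G')$ as $V(G_1)\uplus\dots\uplus V(G_q)\uplus J$, and let $H'$ be the graph with vertex set $\{V(G_1),\dots,V(G_q),J\}$ whose edges are exactly one self-loop $\{V(G_c),V(G_c)\}$ for each $c\in\mathcal{C}$. Then for every $\ell$, $G$ has a perfect over-the-rainbow matching of weight $\ell$ if and only if $G'$ has a perfect conjoining matching (with respect to $H'$ and this partition) of weight $\ell$.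
   Context: A perfect over-the-rainbow matching of $G$ is a pair $(M,\xi)$ where $M$ is a perfect matching of $G$ and $\xi:M\to\mathcal{C}$ is surjective with $\xi(e)\in\lambda(e)$ for all $e\in M$; its weight is $\sum_{e\in M}\gamma(e,\xi(e))$. Given a graph $G'$ with edge weights, a partition $V(G')=V_1\uplus\dots\uplus V_t$, and a graph $H'$ (possibly with self-loops) on vertex set $\{V_1,\dots,V_t\}$, a perfect conjoining matching is a perfect matching $M'$ of $G'$ such that for every edge $\{V_i,V_j\}\in E(H')$ (with $i=j$ for a self-loop) there is an edge $\{u,v\}\in M'$ with $u\in V_i$ and $v\in V_j$; its weight is the sum of the weights of its edges. *)

theory Defs
  imports Complex_Main
begin

definition simple_graph :: "'a set \<Rightarrow> 'a set set \<Rightarrow> bool" where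
  "simple_graph V E \<longleftrightarrow> finite V \<and>
     (\<forall>e\<in>E. \<exists>u v. e = {u, v} \<and> u \<noteq> v \<and> u \<in> V \<and> v \<in> V)"

definition perfect_matching :: "'a set \<Rightarrow> 'a set set \<Rightarrow> 'a set set \<Rightarrow> bool" where
  "perfect_matching V E M \<longleftrightarrow> M \<subseteq> E \<and> (\<forall>v\<in>V. \<exists>!e. e \<in> M \<and> v \<in> e)"

definition perfect_otr_matching ::
  "'a set \<Rightarrow> 'a set set \<Rightarrow> 'c set \<Rightarrow> ('a set \<Rightarrow> 'c set) \<Rightarrow> 'a set set \<Rightarrow> ('a set \<Rightarrow> 'c) \<Rightarrow> bool" where
  "perfect_otr_matching V E C lam M \<xi> \<longleftrightarrow> perfect_matching V E M \<and> \<xi> ` M = C \<and> (\<forall>e\<in>M. \<xi> e \<in> lam e)"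

definition otr_weight :: "('a set \<Rightarrow> 'c \<Rightarrow> rat) \<Rightarrow> 'a set set \<Rightarrow> ('a set \<Rightarrow> 'c) \<Rightarrow> rat" where
  "otr_weight gam M \<xi> = (\<Sum>e\<in>M. gam e (\<xi> e))"

text \<open>Perfect conjoining matching of (V', E') w.r.t. a partition P of V' and a graph H'
  on vertex set P with edge set EH; an edge of H' is a set {X, Y} of parts
  (a self-loop at X is {X, X} = {X}).\<close>
definition perfect_conjoining_matching ::
  "'b set \<Rightarrow> 'b set set \<Rightarrow> 'b set set \<Rightarrow> 'b set set set \<Rightarrow> 'b set set \<Rightarrow> bool" where
  "perfect_conjoining_matching V' E' P EH M' \<longleftrightarrow> perfect_matching V' E' M' \<and>
     (\<forall>h\<in>EH. \<exists>X Y. h = {X, Y} \<and> (\<exists>u v. {u, v} \<in> M' \<and> u \<in> X \<and> v \<in> Y))"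

text \<open>The construction. Vertex v_c is Inl (v, c); the vertices of J(v) are Inr (v, i), 1 \<le> i \<le> q-1.\<close>
definition copyV :: "'a set \<Rightarrow> nat \<Rightarrow> ('a \<times> nat + 'a \<times> nat) set" where
  "copyV V c = {Inl (v, c) | v. v \<in> V}"

definition Jv :: "nat \<Rightarrow> 'a \<Rightarrow> ('a \<times> nat + 'a \<times> nat) set" where
  "Jv q v = {Inr (v, i) | i. i \<in> {1..q-1}}"

definition JJ :: "'a set \<Rightarrow> nat \<Rightarrow> ('a \<times> nat + 'a \<times> nat) set" where
  "JJ V q = (\<Union>v\<in>V. Jv q v)"

definition Gp_V :: "'a set \<Rightarrow> nat \<Rightarrow> ('a \<times> nat + 'a \<times> nat) set" where
  "Gp_V V q = (\<Union>c\<in>{1..q}. copyV V c) \<union> JJ V q"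

definition Gp_E :: "'a set \<Rightarrow> 'a set set \<Rightarrow> nat \<Rightarrow> ('a set \<Rightarrow> nat set)
     \<Rightarrow> ('a \<times> nat + 'a \<times> nat) set set" where
  "Gp_E V E q lam =
     {{Inl (v, c), Inl (w, c)} | v w c. {v, w} \<in> E \<and> c \<in> {1..q} \<and> c \<in> lam {v, w}}
     \<union> {{Inl (v, c), x} | v c x. v \<in> V \<and> c \<in> {1..q} \<and> x \<in> Jv q v}"

definition Gp_weight :: "('a set \<Rightarrow> nat \<Rightarrow> rat) \<Rightarrow> ('a \<times> nat + 'a \<times> nat) set \<Rightarrow> rat" where
  "Gp_weight gam e' =
     (if \<exists>v w c. e' = {Inl (v, c), Inl (w, c)}
      then (let (v, w, c) = (SOME (v, w, c). e' = {Inl (v, c), Inl (w, c)}) in gam {v, w} c)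
      else 0)"

definition Gp_parts :: "'a set \<Rightarrow> nat \<Rightarrow> ('a \<times> nat + 'a \<times> nat) set set" where
  "Gp_parts V q = {copyV V c | c. c \<in> {1..q}} \<union> {JJ V q}"

definition Hp_E :: "'a set \<Rightarrow> nat \<Rightarrow> ('a \<times> nat + 'a \<times> nat) set set set" where
  "Hp_E V q = {{copyV V c, copyV V c} | c. c \<in> {1..q}}"

end

theory Submission
  imports Defs
begin


lemma Gp_E_cases:
  assumes "e \<in> Gp_E V E q lam"
  obtains v w c where "e = {Inl (v, c), Inl (w, c)}" "{v,w} \<in> E" "c \<in> {1..q}" "c \<in> lam {v,w}"
  | v c i where "e = {Inl (v, c), Inr (v, i)}" "v \<in> V" "c \<in> {1..q}" "i \<in> {1..q-1}"
  using assms unfolding Gp_E_def Jv_def by blast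

lemma Gp_V_eq: "Gp_V V q = {Inl (v, c) | v c. v \<in> V \<and> c \<in> {1..q}} \<union> {Inr (v, i) | v i. v \<in> V \<and> i \<in> {1..q-1}}"
  unfolding Gp_V_def copyV_def JJ_def Jv_def by blast

lemma weight_copy: "Gp_weight gam {Inl (v, c), Inl (w, c)} = gam {v, w} c"
proof -
  define e where "e = ({Inl (v, c), Inl (w, c)} :: ('a \<times> nat + 'a \<times> nat) set)"
  define P where "P = (\<lambda>p. case p of (a, b, c') \<Rightarrow> e = {Inl (a, c'), Inl (b, c')})"
  have ex: "\<exists>p. P p" unfolding P_def e_def by (rule exI[of _ "(v, w, c)"]) simp
  obtain a b c' where abc: "Eps P = (a, b, c')" by (cases "Eps P") blast
  have Pabc: "P (a, b, c')" using someI_ex[OF ex] abc by simp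
  then have eq: "e = {Inl (a, c'), Inl (b, c')}" unfolding P_def by simp
  have cc: "c' = c" using eq unfolding e_def by (auto simp: doubleton_eq_iff)
  have ab: "{a, b} = {v, w}" using eq unfolding e_def cc by (auto simp: doubleton_eq_iff)
  have cond: "\<exists>v w c. e = {Inl (v, c), Inl (w, c)}" using eq by blast
  have "Gp_weight gam e = (let (v, w, c) = Eps P in gam {v, w} c)"
    unfolding Gp_weight_def P_def by (rule if_P[OF cond])
  also have "\<dots> = gam {a, b} c'" using abc by simp
  finally show ?thesis using ab cc e_def by simp
qed

lemma weight_J: "Gp_weight gam {Inl a, Inr b} = 0"
  unfolding Gp_weight_def by (auto simp: doubleton_eq_iff)



lemma fwd:
  assumes sg: "simple_graph V E" and q: "q \<ge> 1"
    and lamq: "\<forall>e\<in>E. lam e \<subseteq> {1..q} \<and> lam e \<noteq> {}"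
    and otr: "perfect_otr_matching V E {1..q} lam M \<xi>"
  shows "\<exists>M'. perfect_conjoining_matching (Gp_V V q) (Gp_E V E q lam) (Gp_parts V q) (Hp_E V q) M'
               \<and> (\<Sum>e\<in>M'. Gp_weight gam e) = otr_weight gam M \<xi>"
proof -
  have MsE: "M \<subseteq> E" and uniq: "\<forall>v\<in>V. \<exists>!e. e \<in> M \<and> v \<in> e"
    and surj: "\<xi> ` M = {1..q}" and lamx: "\<forall>e\<in>M. \<xi> e \<in> lam e"
    using otr unfolding perfect_otr_matching_def perfect_matching_def by auto
  have Mcol: "\<xi> e \<in> {1..q}" if "e \<in> M" for e using surj that by blast
  have finV: "finite V" and Eform: "\<forall>e\<in>E. \<exists>u v. e = {u, v} \<and> u \<noteq> v \<and> u \<in> V \<and> v \<in> V"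
    using sg unfolding simple_graph_def by auto
  have EsP: "E \<subseteq> Pow V"
  proof
    fix e assume "e \<in> E"
    then obtain u v where "e = {u, v}" "u \<in> V" "v \<in> V" using Eform by blast
    then show "e \<in> Pow V" by simp
  qed
  have finE: "finite E" by (rule finite_subset[OF EsP]) (simp add: finV)
  have finM: "finite M" by (rule finite_subset[OF MsE finE])
  define ev where "ev v = (THE e. e \<in> M \<and> v \<in> e)" for v
  have ev: "ev v \<in> M \<and> v \<in> ev v" if "v \<in> V" for v
    using theI'[OF uniq[rule_format, OF that]] unfolding ev_def by blast
  have evu: "e = ev v" if "v \<in> V" "e \<in> M" "v \<in> e" for v e
    using uniq that ev by blast
  define cv where "cv v = \<xi> (ev v)" for v
  have cvq: "cv v \<in> {1..q}" if "v \<in> V" for v using Mcol ev that cv_def by auto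
  define g where "g e = ((\<lambda>x. Inl (x, \<xi> e)) ` e :: ('a \<times> nat + 'a \<times> nat) set)" for e :: "'a set"
  define f where "f v i = (Inr (v, if i < cv v then i else i - 1) :: 'a \<times> nat + 'a \<times> nat)" for v i
  define CE where "CE = g ` M"
  define S where "S = {(v,i). v \<in> V \<and> i \<in> {1..q} \<and> i \<noteq> cv v}"
  define JE where "JE = (\<lambda>(v,i). {Inl (v,i), f v i}) ` S"
  define M' where "M' = CE \<union> JE"
  have JEE: "\<exists>v i. (v,i) \<in> S \<and> e = {Inl (v,i), f v i}" if "e \<in> JE" for e
    using that unfolding JE_def by auto
  have JEI: "{Inl (v,i), f v i} \<in> JE" if "(v,i) \<in> S" for v i
    using that unfolding JE_def by (rule rev_image_eqI) simp
  have Mform: "\<exists>a b. e = {a, b} \<and> a \<noteq> b \<and> a \<in> V \<and> b \<in> V" if "e \<in> M" for e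
    using Eform MsE that by blast
  have fJ: "f v i \<in> Jv q v" if "(v,i) \<in> S" for v i
  proof -
    have "i \<in> {1..q}" "i \<noteq> cv v" "cv v \<in> {1..q}" using that cvq unfolding S_def by auto
    then have "(if i < cv v then i else i - 1) \<in> {1..q-1}" by auto
    then show ?thesis unfolding f_def Jv_def by blast
  qed
  have sub: "M' \<subseteq> Gp_E V E q lam"
  proof
    fix e assume "e \<in> M'"
    then consider "e \<in> CE" | "e \<in> JE" unfolding M'_def by blast
    then show "e \<in> Gp_E V E q lam"
    proof cases
      case 1
      then obtain e0 where e0: "e0 \<in> M" "e = g e0" unfolding CE_def by blast
      then obtain a b where ab: "e0 = {a,b}" using Mform by blast
      have "e = {Inl (a, \<xi> e0), Inl (b, \<xi> e0)}" using e0 ab g_def by auto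
      moreover have "{a,b} \<in> E" using ab e0 MsE by auto
      moreover have "\<xi> e0 \<in> {1..q}" "\<xi> e0 \<in> lam {a,b}" using Mcol lamx e0 ab by auto
      ultimately show ?thesis unfolding Gp_E_def by blast
    next
      case 2
      then obtain v i where vi: "(v,i) \<in> S" "e = {Inl (v,i), f v i}" using JEE by blast
      then have "v \<in> V" "i \<in> {1..q}" using S_def by auto
      then show ?thesis using fJ[OF vi(1)] vi(2) unfolding Gp_E_def by blast
    qed
  qed
  have CEInl: "\<exists>y. x = Inl y" if "e \<in> CE" "x \<in> e" for e x
    using that unfolding CE_def g_def by blast
  have cover: "\<exists>!e. e \<in> M' \<and> x \<in> e" if "x \<in> Gp_V V q" for x
  proof -
    from that consider (L) v c where "x = Inl (v,c)" "v \<in> V" "c \<in> {1..q}"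
      | (R) v j where "x = Inr (v,j)" "v \<in> V" "j \<in> {1..q-1}"
      unfolding Gp_V_eq by blast
    then show ?thesis
    proof cases
      case L
      show ?thesis
      proof (cases "c = cv v")
        case True
        have inM': "g (ev v) \<in> M'" using ev[OF L(2)] unfolding M'_def CE_def by blast
        have inE: "x \<in> g (ev v)" using ev[OF L(2)] True L(1) unfolding g_def cv_def by blast
        show ?thesis
        proof (rule ex1I[of _ "g (ev v)"])
          show "g (ev v) \<in> M' \<and> x \<in> g (ev v)" using inM' inE by blast
        next
          fix e assume e: "e \<in> M' \<and> x \<in> e"
          then consider "e \<in> CE" | "e \<in> JE" unfolding M'_def by blast
          then show "e = g (ev v)"
          proof cases
            case 1
            then obtain e0 where e0: "e0 \<in> M" "e = g e0" unfolding CE_def by blast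
            then have "v \<in> e0" using e L(1) unfolding g_def by auto
            then show ?thesis using evu[OF L(2) e0(1)] e0 by simp
          next
            case 2
            then obtain v' i where vi: "(v',i) \<in> S" "e = {Inl (v',i), f v' i}" using JEE by blast
            then have "v' = v" "i = c" using e L(1) f_def by auto
            then show ?thesis using vi True S_def by auto
          qed
        qed
      next
        case False
        have inS: "(v,c) \<in> S" using L False S_def by auto
        have inM': "{Inl (v,c), f v c} \<in> M'" using inS JEI unfolding M'_def by blast
        show ?thesis
        proof (rule ex1I[of _ "{Inl (v,c), f v c}"])
          show "{Inl (v,c), f v c} \<in> M' \<and> x \<in> {Inl (v,c), f v c}" using inM' L(1) by blast
        next
          fix e assume e: "e \<in> M' \<and> x \<in> e"
          then consider "e \<in> CE" | "e \<in> JE" unfolding M'_def by blast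
          then show "e = {Inl (v,c), f v c}"
          proof cases
            case 1
            then obtain e0 where e0: "e0 \<in> M" "e = g e0" unfolding CE_def by blast
            then have "v \<in> e0" "\<xi> e0 = c" using e L(1) unfolding g_def by auto
            then show ?thesis using evu[OF L(2) e0(1)] False cv_def by simp
          next
            case 2
            then obtain v' i where vi: "(v',i) \<in> S" "e = {Inl (v',i), f v' i}" using JEE by blast
            then have "v' = v" "i = c" using e L(1) f_def by auto
            then show ?thesis using vi by simp
          qed
        qed
      qed
    next
      case R
      define i where "i = (if j < cv v then j else j + 1)"
      have cq: "cv v \<in> {1..q}" using cvq R by auto
      have iS: "(v,i) \<in> S" using R cq unfolding S_def i_def by auto
      have fi: "f v i = Inr (v,j)" unfolding f_def i_def by auto
      have inM': "{Inl (v,i), f v i} \<in> M'" using iS JEI unfolding M'_def by blast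
      show ?thesis
      proof (rule ex1I[of _ "{Inl (v,i), f v i}"])
        show "{Inl (v,i), f v i} \<in> M' \<and> x \<in> {Inl (v,i), f v i}" using inM' R(1) fi by simp
      next
        fix e assume e: "e \<in> M' \<and> x \<in> e"
        then consider "e \<in> CE" | "e \<in> JE" unfolding M'_def by blast
        then show "e = {Inl (v,i), f v i}"
        proof cases
          case 1
          then show ?thesis using CEInl e R(1) by blast
        next
          case 2
          then obtain v' i' where vi: "(v',i') \<in> S" "e = {Inl (v',i'), f v' i'}" using JEE by blast
          then have fe: "f v' i' = Inr (v, j)" using e R(1) by auto
          then have "v' = v" unfolding f_def by auto
          then have "(if i' < cv v then i' else i' - 1) = j" "i' \<noteq> cv v" "i' \<ge> 1"
            using fe vi(1) unfolding f_def S_def by auto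
          then have "i' = i" unfolding i_def by auto
          then show ?thesis using vi \<open>v' = v\<close> by simp
        qed
      qed
    qed
  qed
  have conj: "\<forall>h\<in>Hp_E V q. \<exists>X Y. h = {X, Y} \<and> (\<exists>u v. {u, v} \<in> M' \<and> u \<in> X \<and> v \<in> Y)"
  proof
    fix h assume "h \<in> Hp_E V q"
    then obtain c where c: "h = {copyV V c, copyV V c}" "c \<in> {1..q}" unfolding Hp_E_def by blast
    then have "c \<in> \<xi> ` M" using surj by simp
    then obtain e0 where e0: "e0 \<in> M" "\<xi> e0 = c" by (auto simp: image_iff)
    then obtain a b where ab: "e0 = {a,b}" "a \<in> V" "b \<in> V" using Mform by blast
    have "g e0 = {Inl (a,c), Inl (b,c)}" using ab e0 g_def by simp
    then have inM: "{Inl (a,c), Inl (b,c)} \<in> M'" using e0 unfolding M'_def CE_def by (metis UnI1 imageI)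
    have inC: "Inl (a,c) \<in> copyV V c" "Inl (b,c) \<in> copyV V c" using ab copyV_def by auto
    show "\<exists>X Y. h = {X, Y} \<and> (\<exists>u v. {u, v} \<in> M' \<and> u \<in> X \<and> v \<in> Y)"
      by (rule exI[of _ "copyV V c"], rule exI[of _ "copyV V c"]) (use c(1) inM inC in blast)
  qed
  have finCE: "finite CE" using finM CE_def by simp
  have finS: "finite S"
    by (rule finite_subset[of _ "V \<times> {1..q}"]) (auto simp: S_def finV)
  have finJE: "finite JE" using finS JE_def by simp
  have disj: "CE \<inter> JE = {}"
  proof -
    have "e \<notin> CE" if "e \<in> JE" for e
    proof -
      obtain v i where "e = {Inl (v,i), f v i}" using \<open>e \<in> JE\<close> JEE by blast
      then have "f v i \<in> e" by simp
      then show ?thesis using CEInl unfolding f_def by fastforce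
    qed
    then show ?thesis by blast
  qed
  have JE0: "(\<Sum>e\<in>JE. Gp_weight gam e) = 0"
  proof (rule sum.neutral, rule ballI)
    fix e assume "e \<in> JE"
    then obtain v i where "e = {Inl (v,i), f v i}" using JEE by blast
    moreover have "Gp_weight gam {Inl (v,i), f v i} = 0" unfolding f_def by (rule weight_J)
    ultimately show "Gp_weight gam e = 0" by simp
  qed
  have injg: "inj_on g M"
  proof
    fix e1 e2 assume e: "e1 \<in> M" "e2 \<in> M" "g e1 = g e2"
    obtain a where a: "a \<in> e1" using Mform e(1) by blast
    have "Inl (a, \<xi> e1) \<in> g e2" using e a g_def by auto
    then have xi: "\<xi> e1 = \<xi> e2" unfolding g_def by auto
    show "e1 = e2"
    proof (rule set_eqI)
      fix x
      have "x \<in> e1 \<longleftrightarrow> Inl (x, \<xi> e1) \<in> g e1" unfolding g_def by auto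
      also have "\<dots> \<longleftrightarrow> Inl (x, \<xi> e2) \<in> g e2" using e(3) xi by simp
      also have "\<dots> \<longleftrightarrow> x \<in> e2" unfolding g_def by auto
      finally show "x \<in> e1 \<longleftrightarrow> x \<in> e2" .
    qed
  qed
  have "(\<Sum>e\<in>M'. Gp_weight gam e) = (\<Sum>e\<in>CE. Gp_weight gam e)"
    unfolding M'_def sum.union_disjoint[OF finCE finJE disj] JE0 by simp
  also have "\<dots> = (\<Sum>e\<in>M. Gp_weight gam (g e))"
    unfolding CE_def using sum.reindex[OF injg] by simp
  also have "\<dots> = (\<Sum>e\<in>M. gam e (\<xi> e))"
  proof (rule sum.cong[OF refl])
    fix e assume "e \<in> M"
    then obtain a b where ab: "e = {a,b}" using Mform by blast
    then have "g e = {Inl (a, \<xi> e), Inl (b, \<xi> e)}" unfolding g_def by auto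
    then show "Gp_weight gam (g e) = gam e (\<xi> e)" using weight_copy ab by simp
  qed
  finally have w: "(\<Sum>e\<in>M'. Gp_weight gam e) = otr_weight gam M \<xi>" unfolding otr_weight_def .
  have "perfect_conjoining_matching (Gp_V V q) (Gp_E V E q lam) (Gp_parts V q) (Hp_E V q) M'"
    unfolding perfect_conjoining_matching_def perfect_matching_def using sub cover conj by blast
  then show ?thesis using w by blast
qed



lemma bwd:
  assumes sg: "simple_graph V E" and q: "q \<ge> 1"
    and lamq: "\<forall>e\<in>E. lam e \<subseteq> {1..q} \<and> lam e \<noteq> {}"
    and pcm: "perfect_conjoining_matching (Gp_V V q) (Gp_E V E q lam) (Gp_parts V q) (Hp_E V q) M'"
  shows "\<exists>M \<xi>. perfect_otr_matching V E {1..q} lam M \<xi> \<and> otr_weight gam M \<xi> = (\<Sum>e\<in>M'. Gp_weight gam e)"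
proof -
  have sub: "M' \<subseteq> Gp_E V E q lam" and cover: "\<forall>x\<in>Gp_V V q. \<exists>!e. e \<in> M' \<and> x \<in> e"
    and conj: "\<forall>h\<in>Hp_E V q. \<exists>X Y. h = {X, Y} \<and> (\<exists>u v. {u, v} \<in> M' \<and> u \<in> X \<and> v \<in> Y)"
    using pcm unfolding perfect_conjoining_matching_def perfect_matching_def by auto
  have finV: "finite V" and Eform: "\<forall>e\<in>E. \<exists>u v. e = {u, v} \<and> u \<noteq> v \<and> u \<in> V \<and> v \<in> V"
    using sg unfolding simple_graph_def by auto
  have Edist: "v \<noteq> w \<and> v \<in> V \<and> w \<in> V" if "{v,w} \<in> E" for v w
    using Eform that by (metis doubleton_eq_iff)
  have uq: "e1 = e2" if "x \<in> Gp_V V q" "e1 \<in> M'" "e2 \<in> M'" "x \<in> e1" "x \<in> e2" for x e1 e2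
    using cover that by blast
  have InlV: "Inl (v,c) \<in> Gp_V V q" if "v \<in> V" "c \<in> {1..q}" for v c
    using that unfolding Gp_V_eq by blast
  have InrV: "Inr (v,i) \<in> Gp_V V q" if "v \<in> V" "i \<in> {1..q-1}" for v i
    using that unfolding Gp_V_eq by blast
  define isC where "isC e = (\<forall>x\<in>e. \<exists>y. x = Inl y)" for e :: "('a \<times> nat + 'a \<times> nat) set"
  define CEp where "CEp = {e\<in>M'. isC e}"
  have CEform: "\<exists>v w c. e = {Inl (v,c), Inl (w,c)} \<and> {v,w} \<in> E \<and> c \<in> {1..q} \<and> c \<in> lam {v,w}
      \<and> v \<noteq> w \<and> v \<in> V \<and> w \<in> V" if "e \<in> CEp" for e
  proof -
    have "e \<in> Gp_E V E q lam" "isC e" using that sub CEp_def by auto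
    then show ?thesis
    proof (cases rule: Gp_E_cases)
      case (1 v w c)
      then show ?thesis using Edist by blast
    next
      case (2 v c i)
      then show ?thesis using \<open>isC e\<close> isC_def by auto
    qed
  qed
  have Jform: "\<exists>v c i. e = {Inl (v,c), Inr (v,i)} \<and> v \<in> V \<and> c \<in> {1..q} \<and> i \<in> {1..q-1}"
    if "e \<in> M'" "e \<notin> CEp" for e
  proof -
    have "e \<in> Gp_E V E q lam" using that sub by auto
    then show ?thesis
    proof (cases rule: Gp_E_cases)
      case (1 v w c)
      then show ?thesis using that CEp_def isC_def by auto
    next
      case (2 v c i)
      then show ?thesis by blast
    qed
  qed
  have colour: "\<exists>!c. \<exists>e\<in>CEp. Inl (v,c) \<in> e" if vV: "v \<in> V" for v
  proof -
    define A where "A = {c\<in>{1..q}. \<exists>x\<in>Jv q v. {Inl (v,c), x} \<in> M'}"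
    define B where "B = {c\<in>{1..q}. \<exists>e\<in>CEp. Inl (v,c) \<in> e}"
    have Bq: "c \<in> {1..q}" if "e \<in> CEp" "Inl (v,c) \<in> e" for c e
      using CEform[OF that(1)] that(2) by auto
    have AB: "A \<union> B = {1..q}"
    proof
      show "A \<union> B \<subseteq> {1..q}" unfolding A_def B_def by auto
    next
      show "{1..q} \<subseteq> A \<union> B"
      proof
        fix c assume c: "c \<in> {1..q}"
        then obtain e where e: "e \<in> M'" "Inl (v,c) \<in> e" using cover InlV[OF vV c] by blast
        show "c \<in> A \<union> B"
        proof (cases "e \<in> CEp")
          case True then show ?thesis using c e B_def by auto
        next
          case False
          then obtain a c' i where "e = {Inl (a,c'), Inr (a,i)}" "i \<in> {1..q-1}"
            using Jform e(1) by blast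
          then have "e = {Inl (v,c), Inr (v,i)}" "Inr (v,i) \<in> Jv q v" using e(2) unfolding Jv_def by auto
          then show ?thesis using c e A_def by blast
        qed
      qed
    qed
    have AB0: "A \<inter> B = {}"
    proof (rule ccontr)
      assume "A \<inter> B \<noteq> {}"
      then obtain c where cA: "c \<in> A" and cB: "c \<in> B" by blast
      from cA obtain x where c: "c \<in> {1..q}" and x: "x \<in> Jv q v" "{Inl (v,c), x} \<in> M'"
        unfolding A_def by blast
      from cB obtain e where e: "e \<in> CEp" "Inl (v,c) \<in> e" unfolding B_def by blast
      have eM: "e \<in> M'" and iC: "isC e" using e(1) unfolding CEp_def by auto
      have ee: "e = {Inl (v,c), x}" by (rule uq[OF InlV[OF vV c] eM x(2) e(2)]) simp
      obtain i where xi: "x = Inr (v,i)" using x(1) unfolding Jv_def by blast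
      have "\<exists>y. x = Inl y" using iC ee unfolding isC_def by simp
      then show False using xi by simp
    qed
    have cardJ: "card (Jv q v) = q - 1"
    proof -
      have "Jv q v = (\<lambda>i. Inr (v,i)) ` {1..q-1}" unfolding Jv_def by blast
      moreover have "inj_on (\<lambda>i. Inr (v,i) :: 'a \<times> nat + 'a \<times> nat) {1..q-1}" by (rule inj_onI) simp
      ultimately show ?thesis using card_image by fastforce
    qed
    have finJ: "finite (Jv q v)" unfolding Jv_def by simp
    have finA: "finite A" unfolding A_def by simp
    have A1: "card A \<le> q - 1"
    proof -
      define h where "h c = (SOME x. x \<in> Jv q v \<and> {Inl (v,c), x} \<in> M')" for c
      have h: "h c \<in> Jv q v \<and> {Inl (v,c), h c} \<in> M'" if "c \<in> A" for c
      proof -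
        from that obtain x where "x \<in> Jv q v \<and> {Inl (v,c), x} \<in> M'" unfolding A_def by blast
        then show ?thesis unfolding h_def by (rule someI)
      qed
      have "inj_on h A"
      proof
        fix c1 c2 assume c: "c1 \<in> A" "c2 \<in> A" "h c1 = h c2"
        have h1: "h c1 \<in> Jv q v" "{Inl (v,c1), h c1} \<in> M'" using h[OF c(1)] by auto
        have h2: "{Inl (v,c2), h c1} \<in> M'" using h[OF c(2)] c(3) by auto
        obtain i where i: "h c1 = Inr (v,i)" "i \<in> {1..q-1}" using h1(1) unfolding Jv_def by blast
        have "{Inl (v,c1), h c1} = {Inl (v,c2), h c1}"
          by (rule uq[OF InrV[OF vV i(2)] h1(2) h2]) (simp_all add: i(1))
        then show "c1 = c2" using i by (auto simp: doubleton_eq_iff)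
      qed
      moreover have "h ` A \<subseteq> Jv q v" using h by blast
      ultimately have "card A \<le> card (Jv q v)" by (rule card_inj_on_le[OF _ _ finJ])
      then show ?thesis using cardJ by simp
    qed
    have A2: "q - 1 \<le> card A"
    proof -
      define g where "g x = (SOME c. c \<in> {1..q} \<and> {Inl (v,c), x} \<in> M')" for x
      have ex: "\<exists>c. c \<in> {1..q} \<and> {Inl (v,c), x} \<in> M'" if xJ: "x \<in> Jv q v" for x
      proof -
        obtain i where i: "x = Inr (v,i)" "i \<in> {1..q-1}" using xJ unfolding Jv_def by blast
        obtain e where e: "e \<in> M'" "x \<in> e" using cover InrV[OF vV i(2)] i(1) by blast
        have "\<not> isC e" using e(2) i(1) unfolding isC_def by auto
        then have "e \<notin> CEp" unfolding CEp_def by blast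
        then obtain a c i' where ac: "e = {Inl (a,c), Inr (a,i')}" "c \<in> {1..q}"
          using Jform[OF e(1)] by blast
        have "a = v" using ac(1) e(2) i(1) by auto
        then have "e = {Inl (v,c), x}" using ac(1) e(2) i(1) by auto
        then show ?thesis using e(1) ac(2) by blast
      qed
      have g: "g x \<in> {1..q} \<and> {Inl (v, g x), x} \<in> M'" if xJ: "x \<in> Jv q v" for x
      proof -
        obtain c where "c \<in> {1..q} \<and> {Inl (v,c), x} \<in> M'" using ex[OF xJ] by blast
        then show ?thesis unfolding g_def by (rule someI)
      qed
      have "inj_on g (Jv q v)"
      proof
        fix x y assume xy: "x \<in> Jv q v" "y \<in> Jv q v" "g x = g y"
        have gx: "g x \<in> {1..q}" "{Inl (v, g x), x} \<in> M'" using g[OF xy(1)] by auto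
        have gy: "{Inl (v, g x), y} \<in> M'" using g[OF xy(2)] xy(3) by auto
        obtain i where i: "x = Inr (v,i)" using xy(1) unfolding Jv_def by blast
        obtain j where j: "y = Inr (v,j)" using xy(2) unfolding Jv_def by blast
        have "{Inl (v, g x), x} = {Inl (v, g x), y}"
          by (rule uq[OF InlV[OF vV gx(1)] gx(2) gy]) simp_all
        then show "x = y" using i j by (auto simp: doubleton_eq_iff)
      qed
      moreover have "g ` Jv q v \<subseteq> A"
      proof
        fix c assume "c \<in> g ` Jv q v"
        then obtain x where x: "x \<in> Jv q v" "c = g x" by blast
        show "c \<in> A" unfolding A_def using g[OF x(1)] x by blast
      qed
      ultimately have "card (Jv q v) \<le> card A" by (rule card_inj_on_le[OF _ _ finA])
      then show ?thesis using cardJ by simp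
    qed
    have "B = {1..q} - A" using AB AB0 by blast
    moreover have "A \<subseteq> {1..q}" using AB by blast
    ultimately have "card B = q - card A" using card_Diff_subset[OF finA] by simp
    then have "card B = 1" using A1 A2 q by linarith
    then obtain c0 where "B = {c0}" using card_1_singletonE by blast
    then have c0B: "c0 \<in> B" and Bc0: "\<And>c. c \<in> B \<Longrightarrow> c = c0" by auto
    show ?thesis
    proof (rule ex1I[of _ c0])
      show "\<exists>e\<in>CEp. Inl (v,c0) \<in> e" using c0B unfolding B_def by blast
    next
      fix c assume "\<exists>e\<in>CEp. Inl (v,c) \<in> e"
      then obtain e where "e \<in> CEp" "Inl (v,c) \<in> e" by blast
      then have "c \<in> B" unfolding B_def using Bq by blast
      then show "c = c0" by (rule Bc0)
    qed
  qed
  define proj where "proj e = {v. \<exists>c. Inl (v,c) \<in> e}" for e :: "('a \<times> nat + 'a \<times> nat) set"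
  define col where "col e = (SOME c. \<exists>v. Inl (v,c) \<in> e)" for e :: "('a \<times> nat + 'a \<times> nat) set"
  have pc: "proj e = {v,w} \<and> col e = c" if "e = {Inl (v,c), Inl (w,c)}" for e v w c
  proof -
    have "\<exists>c'. \<exists>x. Inl (x,c') \<in> e" using that by blast
    then have "\<exists>x. Inl (x, col e) \<in> e" unfolding col_def by (rule someI_ex)
    then have "col e = c" using that by auto
    moreover have "proj e = {v,w}" using that unfolding proj_def by auto
    ultimately show ?thesis by simp
  qed
  have injp: "inj_on proj CEp"
  proof
    fix e1 e2 assume e: "e1 \<in> CEp" "e2 \<in> CEp" "proj e1 = proj e2"
    obtain v w c1 where 1: "e1 = {Inl (v,c1), Inl (w,c1)}" "v \<in> V" using CEform e(1) by blast
    obtain a b c2 where 2: "e2 = {Inl (a,c2), Inl (b,c2)}" using CEform e(2) by blast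
    have vw: "{v,w} = {a,b}" using pc 1 2 e(3) by metis
    then have "Inl (v,c2) \<in> e2" using 2 by auto
    moreover have "Inl (v,c1) \<in> e1" using 1 by auto
    ultimately have "c1 = c2" using colour[OF 1(2)] e by blast
    then show "e1 = e2" using 1 2 vw by auto
  qed
  define M where "M = proj ` CEp"
  define \<xi> where "\<xi> e = col (inv_into CEp proj e)" for e
  have xi: "\<xi> (proj e) = col e" if "e \<in> CEp" for e
    unfolding \<xi>_def using inv_into_f_f[OF injp that] by simp
  have MsE: "M \<subseteq> E"
  proof
    fix e assume "e \<in> M"
    then obtain e' where e': "e' \<in> CEp" "e = proj e'" using M_def by blast
    then obtain v w c where "e' = {Inl (v,c), Inl (w,c)}" "{v,w} \<in> E" using CEform by blast
    then show "e \<in> E" using pc e' by metis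
  qed
  have pm: "\<forall>v\<in>V. \<exists>!e. e \<in> M \<and> v \<in> e"
  proof
    fix v assume vV: "v \<in> V"
    have Inlin: "\<exists>c. Inl (v,c) \<in> e' \<and> c \<in> {1..q}" if eC: "e' \<in> CEp" and vp: "v \<in> proj e'" for e'
    proof -
      obtain a b c where ab: "e' = {Inl (a,c), Inl (b,c)}" "c \<in> {1..q}" using CEform[OF eC] by blast
      have "proj e' = {a,b}" using pc[OF ab(1)] by simp
      then have "v = a \<or> v = b" using vp by simp
      then show ?thesis using ab by auto
    qed
    obtain c e0 where c: "e0 \<in> CEp" "Inl (v,c) \<in> e0" using colour[OF vV] by blast
    have "v \<in> proj e0" using c proj_def by blast
    show "\<exists>!e. e \<in> M \<and> v \<in> e"
    proof (rule ex1I[of _ "proj e0"])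
      show "proj e0 \<in> M \<and> v \<in> proj e0" using c \<open>v \<in> proj e0\<close> M_def by blast
    next
      fix e assume e: "e \<in> M \<and> v \<in> e"
      then obtain e' where e': "e' \<in> CEp" "e = proj e'" using M_def by blast
      then obtain c' where c': "Inl (v,c') \<in> e'" "c' \<in> {1..q}" using Inlin e by blast
      have "c' = c" using colour[OF vV] c c' e' by blast
      then have "e' = e0" using uq[OF InlV[OF vV c'(2)]] c c' e' CEp_def by blast
      then show "e = proj e0" using e' by simp
    qed
  qed
  have surj: "\<xi> ` M = {1..q}"
  proof
    show "\<xi> ` M \<subseteq> {1..q}"
    proof
      fix c assume "c \<in> \<xi> ` M"
      then obtain e' where e': "e' \<in> CEp" "c = \<xi> (proj e')" unfolding M_def by blast
      obtain v w c0 where vw: "e' = {Inl (v,c0), Inl (w,c0)}" "c0 \<in> {1..q}" using CEform[OF e'(1)] by blast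
      have "c = col e'" using e' xi by simp
      also have "\<dots> = c0" using pc[OF vw(1)] by simp
      finally show "c \<in> {1..q}" using vw(2) by simp
    qed
  next
    show "{1..q} \<subseteq> \<xi> ` M"
    proof
      fix c assume c: "c \<in> {1..q}"
      then have "{copyV V c, copyV V c} \<in> Hp_E V q"
        unfolding Hp_E_def mem_Collect_eq by (intro exI[of _ c]) simp
      then have "\<exists>X Y. {copyV V c, copyV V c} = {X, Y} \<and> (\<exists>u v. {u, v} \<in> M' \<and> u \<in> X \<and> v \<in> Y)"
        by (rule bspec[OF conj])
      then obtain X Y where h0: "{copyV V c, copyV V c} = {X,Y}" and "\<exists>u v. {u, v} \<in> M' \<and> u \<in> X \<and> v \<in> Y"
        by iprover
      then obtain u w where h1: "{u,w} \<in> M'" "u \<in> X" "w \<in> Y" by iprover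
      have h: "{copyV V c, copyV V c} = {X,Y}" "{u,w} \<in> M'" "u \<in> X" "w \<in> Y" using h0 h1 by auto
      then have XY: "X = copyV V c" "Y = copyV V c" by (auto simp: doubleton_eq_iff)
      obtain a where a: "u = Inl (a,c)" using h(3) XY unfolding copyV_def by blast
      obtain b where b: "w = Inl (b,c)" using h(4) XY unfolding copyV_def by blast
      have "isC {u,w}" unfolding isC_def using a b by blast
      then have uw: "{u,w} \<in> CEp" using h(2) unfolding CEp_def by blast
      have "col {u,w} = c" using pc a b by blast
      then have "\<xi> (proj {u,w}) = c" using xi[OF uw] by simp
      moreover have "proj {u,w} \<in> M" using uw unfolding M_def by blast
      ultimately show "c \<in> \<xi> ` M" by (metis image_eqI)
    qed
  qed
  have lamx: "\<forall>e\<in>M. \<xi> e \<in> lam e"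
  proof
    fix e assume "e \<in> M"
    then obtain e' where e': "e' \<in> CEp" "e = proj e'" unfolding M_def by blast
    obtain v w c where vw: "e' = {Inl (v,c), Inl (w,c)}" "c \<in> lam {v,w}" using CEform[OF e'(1)] by blast
    have pe: "proj e' = {v,w}" "col e' = c" using pc[OF vw(1)] by auto
    have "\<xi> e = \<xi> (proj e')" using e'(2) by simp
    also have "\<dots> = col e'" by (rule xi[OF e'(1)])
    finally have "\<xi> e = c" "e = {v,w}" using pe e'(2) by simp_all
    then show "\<xi> e \<in> lam e" using vw(2) by simp
  qed
  have finVp: "finite (Gp_V V q)"
  proof (rule finite_subset)
    show "Gp_V V q \<subseteq> Inl ` (V \<times> {1..q}) \<union> Inr ` (V \<times> {1..q-1})" unfolding Gp_V_eq by auto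
    show "finite (Inl ` (V \<times> {1..q}) \<union> Inr ` (V \<times> {1..q-1}) :: ('a \<times> nat + 'a \<times> nat) set)"
      using finV by simp
  qed
  have M'sub: "M' \<subseteq> Pow (Gp_V V q)"
  proof
    fix e assume e: "e \<in> M'"
    show "e \<in> Pow (Gp_V V q)"
    proof (cases "e \<in> CEp")
      case True
      then obtain v w c where "e = {Inl (v,c), Inl (w,c)}" "c \<in> {1..q}" "v \<in> V" "w \<in> V"
        using CEform by blast
      then show ?thesis using InlV by auto
    next
      case False
      then obtain v c i where "e = {Inl (v,c), Inr (v,i)}" "v \<in> V" "c \<in> {1..q}" "i \<in> {1..q-1}"
        using Jform e by blast
      then show ?thesis using InlV InrV by auto
    qed
  qed
  have finM': "finite M'" using M'sub finVp by (meson finite_Pow_iff finite_subset)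
  have "otr_weight gam M \<xi> = (\<Sum>e\<in>proj ` CEp. gam e (\<xi> e))" unfolding otr_weight_def M_def ..
  also have "\<dots> = (\<Sum>e\<in>CEp. gam (proj e) (\<xi> (proj e)))" using sum.reindex[OF injp] by simp
  also have "\<dots> = (\<Sum>e\<in>CEp. Gp_weight gam e)"
  proof (rule sum.cong[OF refl])
    fix e assume e: "e \<in> CEp"
    then obtain v w c where vw: "e = {Inl (v,c), Inl (w,c)}" using CEform by blast
    then show "gam (proj e) (\<xi> (proj e)) = Gp_weight gam e" using xi[OF e] pc weight_copy by metis
  qed
  also have "\<dots> = (\<Sum>e\<in>M'. Gp_weight gam e)"
  proof (rule sum.mono_neutral_left[OF finM'])
    show "CEp \<subseteq> M'" using CEp_def by blast
    show "\<forall>i\<in>M' - CEp. Gp_weight gam i = 0"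
    proof
      fix e assume "e \<in> M' - CEp"
      then obtain v c i where "e = {Inl (v,c), Inr (v,i)}" using Jform by blast
      then show "Gp_weight gam e = 0" using weight_J by simp
    qed
  qed
  finally have w: "otr_weight gam M \<xi> = (\<Sum>e\<in>M'. Gp_weight gam e)" .
  have "perfect_otr_matching V E {1..q} lam M \<xi>"
    unfolding perfect_otr_matching_def perfect_matching_def using MsE pm surj lamx by blast
  then show ?thesis using w by blast
qed

theorem lemma9:
  fixes V :: "'a set" and E :: "'a set set" and q :: nat
    and lam :: "'a set \<Rightarrow> nat set" and gam :: "'a set \<Rightarrow> nat \<Rightarrow> rat" and l :: rat
  assumes "simple_graph V E"
    and "q \<ge> 1"
    and "\<forall>e\<in>E. lam e \<subseteq> {1..q} \<and> lam e \<noteq> {}"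
    and "\<forall>e\<in>E. \<forall>c\<in>lam e. gam e c \<ge> 0"
  shows "(\<exists>M \<xi>. perfect_otr_matching V E {1..q} lam M \<xi> \<and> otr_weight gam M \<xi> = l)
     \<longleftrightarrow> (\<exists>M'. perfect_conjoining_matching (Gp_V V q) (Gp_E V E q lam) (Gp_parts V q) (Hp_E V q) M'
               \<and> (\<Sum>e\<in>M'. Gp_weight gam e) = l)"
proof
  assume "\<exists>M \<xi>. perfect_otr_matching V E {1..q} lam M \<xi> \<and> otr_weight gam M \<xi> = l"
  then obtain M \<xi> where m: "perfect_otr_matching V E {1..q} lam M \<xi>" and w: "otr_weight gam M \<xi> = l"
    by blast
  obtain M' where "perfect_conjoining_matching (Gp_V V q) (Gp_E V E q lam) (Gp_parts V q) (Hp_E V q) M'"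
    and "(\<Sum>e\<in>M'. Gp_weight gam e) = otr_weight gam M \<xi>"
    using fwd[OF assms(1,2,3) m, of gam] by blast
  then show "\<exists>M'. perfect_conjoining_matching (Gp_V V q) (Gp_E V E q lam) (Gp_parts V q) (Hp_E V q) M'
               \<and> (\<Sum>e\<in>M'. Gp_weight gam e) = l"
    using w by auto
next
  assume "\<exists>M'. perfect_conjoining_matching (Gp_V V q) (Gp_E V E q lam) (Gp_parts V q) (Hp_E V q) M'
               \<and> (\<Sum>e\<in>M'. Gp_weight gam e) = l"
  then obtain M' where m: "perfect_conjoining_matching (Gp_V V q) (Gp_E V E q lam) (Gp_parts V q) (Hp_E V q) M'"
    and w: "(\<Sum>e\<in>M'. Gp_weight gam e) = l" by blast
  obtain M \<xi> where "perfect_otr_matching V E {1..q} lam M \<xi>"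
    and "otr_weight gam M \<xi> = (\<Sum>e\<in>M'. Gp_weight gam e)"
    using bwd[OF assms(1,2,3) m, of gam] by blast
  then show "\<exists>M \<xi>. perfect_otr_matching V E {1..q} lam M \<xi> \<and> otr_weight gam M \<xi> = l"
    using w by auto
qed

end
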